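(* Consider a neutral evolutionary model on $N$ sites given by a replacement rule $p$ satisfying the fixation assumption described in the context. For any set $S\subseteq\{1,\ldots,N\}$ of sites, $\rho_S=\sum_{i\in S}\rho_i$. In particular, $\sum_{i=1}^N\rho_i=1$.
   Context: There are $N$ sites $1,\ldots,N$, each always occupied by one individual of type M (mutant) or R (resident); a state is $\mathbf{s}\in\{\mathrm{M},\mathrm{R}\}^N$. A replacement event is a pair $(R,\alpha)$ with $R\subseteq\{1,\ldots,N\}$ and $\alpha:R\to\{1,\ldots,N\}$. A replacement rule is a probability distribution $p(R,\alpha)$ on replacement events, independent of the state. The evolutionary Markov chain: at each time-step an event $(R,\alpha)$ is drawn with probability $p(R,\alpha)$ and the new state is $s_i'=s_i$ if $i\notin R$, $s_i'=s_{\alpha(i)}$ if $i\in R$. Fixation assumption: there exist a site $i$ and a finite sequence of replacement events, each of positive probability, such that if these events occur consecutively (from any initial state) every site ends up carrying the type initially at site $i$. For $S\subseteq\{1,\ldots,N\}$, $\rho_S=\lim_{t\to\infty}\Pr[\mathbf{s}(t)=(\mathrm{M},\ldots,\mathrm{M})]$ for the chain started from the state with M at the sites in $S$ and R at all other sites; $\rho_i=\rho_{\{i\}}$. *)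

theory Defs
  imports "HOL-Probability.Probability"
begin

text \<open>Sites are the elements of a finite type 'site (N = CARD('site)).
  A state assigns to each site True (= mutant M) or False (= resident R).
  A replacement event is a pair (R, alpha); only the values of alpha on R matter.
  A replacement rule is a probability mass function on replacement events.\<close>

type_synonym 'site state = "'site \<Rightarrow> bool"
type_synonym 'site event = "'site set \<times> ('site \<Rightarrow> 'site)"

definition apply_event :: "'site event \<Rightarrow> 'site state \<Rightarrow> 'site state" where
  "apply_event e s = (\<lambda>i. if i \<in> fst e then s (snd e i) else s i)"

definition apply_events :: "'site event list \<Rightarrow> 'site state \<Rightarrow> 'site state" where
  "apply_events es s = fold apply_event es s"

definition fixation_assumption :: "'site event pmf \<Rightarrow> bool" where
  "fixation_assumption p \<longleftrightarrow>
     (\<exists>i es. set es \<subseteq> set_pmf p \<and> (\<forall>s j. apply_events es s j = s i))"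

primrec state_dist :: "'site event pmf \<Rightarrow> 'site state \<Rightarrow> nat \<Rightarrow> 'site state pmf" where
  "state_dist p s0 0 = return_pmf s0"
| "state_dist p s0 (Suc t) = bind_pmf (state_dist p s0 t) (\<lambda>s. map_pmf (\<lambda>e. apply_event e s) p)"

definition init_state :: "'site set \<Rightarrow> 'site state" where
  "init_state S = (\<lambda>i. i \<in> S)"

definition fix_prob_seq :: "'site event pmf \<Rightarrow> 'site set \<Rightarrow> nat \<Rightarrow> real" where
  "fix_prob_seq p S t = pmf (state_dist p (init_state S) t) (\<lambda>_. True)"

definition rho :: "'site event pmf \<Rightarrow> 'site set \<Rightarrow> real" where
  "rho p S = lim (fix_prob_seq p S)"

end

theory Submission
  imports Defs
begin

definition fe :: "'s event \<Rightarrow> 's \<Rightarrow> 's" where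
  "fe e = (\<lambda>i. if i \<in> fst e then snd e i else i)"

primrec anc :: "'s event pmf \<Rightarrow> nat \<Rightarrow> ('s \<Rightarrow> 's) pmf" where
  "anc p 0 = return_pmf id"
| "anc p (Suc t) = bind_pmf (anc p t) (\<lambda>g. map_pmf (\<lambda>e. g \<circ> fe e) p)"

lemma apply_event_fe: "apply_event e s = s \<circ> fe e"
  by (simp add: apply_event_def fe_def fun_eq_iff)

lemma state_anc: "state_dist p s0 t = map_pmf (\<lambda>g. s0 \<circ> g) (anc p t)"
  by (induct t) (simp_all add: map_bind_pmf bind_map_pmf map_pmf_comp apply_event_fe comp_def)

lemma fps: "fix_prob_seq p S t = measure (measure_pmf (anc p t)) {g. \<forall>j. g j \<in> S}"
proof -
  have eq: "(\<lambda>g. init_state S \<circ> g) -` {\<lambda>_. True} = {g. \<forall>j. g j \<in> S}"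
    by (auto simp: init_state_def fun_eq_iff)
  show ?thesis unfolding fix_prob_seq_def state_anc pmf_map eq ..
qed

lemma anc_add: "anc p (m + n) = bind_pmf (anc p m) (\<lambda>g. map_pmf (\<lambda>h. g \<circ> h) (anc p n))"
proof (induct n)
  case 0
  then show ?case by (simp add: map_pmf_def[symmetric] bind_return_pmf' )
next
  case (Suc n)
  then show ?case
    by (simp add: bind_assoc_pmf map_bind_pmf bind_map_pmf map_pmf_comp comp_def)
qed

lemma meas_sum: "measure (measure_pmf (M::('a::finite) pmf)) X = (\<Sum>g\<in>UNIV. pmf M g * (if g \<in> X then 1 else 0))"
  by (simp add: measure_measure_pmf_finite if_distrib sum.If_cases)

lemma meas_bind: "measure (measure_pmf (bind_pmf (M::('a::finite) pmf) N)) (X :: ('b::finite) set)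
   = (\<Sum>g\<in>UNIV. pmf M g * measure (measure_pmf (N g)) X)"
proof -
  have "measure (measure_pmf (bind_pmf M N)) X = (\<Sum>y\<in>X. \<Sum>g\<in>UNIV. pmf M g * pmf (N g) y)"
    by (simp add: measure_measure_pmf_finite pmf_bind integral_measure_pmf[of UNIV])
  also have "\<dots> = (\<Sum>g\<in>UNIV. \<Sum>y\<in>X. pmf M g * pmf (N g) y)" by (rule sum.swap)
  also have "\<dots> = (\<Sum>g\<in>UNIV. pmf M g * measure (measure_pmf (N g)) X)"
    by (simp add: measure_measure_pmf_finite sum_distrib_left)
  finally show ?thesis .
qed


primrec Gs :: "'s event list \<Rightarrow> 's \<Rightarrow> 's" where
  "Gs [] = id"
| "Gs (e # es) = fe e \<circ> Gs es"

lemma Gs_append: "Gs (es @ [e]) = Gs es \<circ> fe e"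
  by (induct es) auto

lemma apply_events_Gs: "apply_events es s = s \<circ> Gs es"
  by (induct es arbitrary: s) (simp_all add: apply_events_def apply_event_fe o_assoc)

lemma anc_one: "anc p (Suc 0) = map_pmf fe p"
  by (simp add: bind_return_pmf)

lemma Gs_in_anc: "set es \<subseteq> set_pmf p \<Longrightarrow> Gs es \<in> set_pmf (anc p (length es))"
proof (induct es)
  case Nil
  then show ?case by (simp add: id_def)
next
  case (Cons e es)
  have "anc p (Suc (length es)) = anc p (1 + length es)" by simp
  also have "\<dots> = bind_pmf (anc p (Suc 0)) (\<lambda>g. map_pmf (\<lambda>h. g \<circ> h) (anc p (length es)))"
    using anc_add[of p 1 "length es"] by simp
  finally have eq: "anc p (Suc (length es)) = \<dots>" .
  have "Gs (e # es) \<in> set_pmf (bind_pmf (anc p (Suc 0)) (\<lambda>g. map_pmf (\<lambda>h. g \<circ> h) (anc p (length es))))"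
    unfolding anc_one using Cons by auto
  then show ?case by (simp only: eq[symmetric] length_Cons)
qed

definition cst :: "('s \<Rightarrow> 's) \<Rightarrow> bool" where
  "cst g \<longleftrightarrow> (\<exists>c. \<forall>j. g j = c)"

lemma cst_comp: "cst h \<Longrightarrow> cst (g \<circ> h)"
  by (auto simp: cst_def)

lemma B_step:
  fixes p :: "('s::finite) event pmf"
  shows "measure (measure_pmf (anc p (m + n))) {g. \<not> cst g}
    \<le> (1 - measure (measure_pmf (anc p n)) {g. cst g}) * measure (measure_pmf (anc p m)) {g. \<not> cst g}"
proof -
  let ?q = "measure (measure_pmf (anc p n)) {g. cst g}"
  have pt: "measure (measure_pmf (map_pmf (\<lambda>h. g \<circ> h) (anc p n))) {g. \<not> cst g}
      \<le> (1 - ?q) * (if g \<in> {g. \<not> cst g} then 1 else 0)" for g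
  proof (cases "cst g")
    case True
    then have "(\<lambda>h. g \<circ> h) -` {g. \<not> cst g} = {}" by (auto simp: cst_def)
    then show ?thesis using True by simp
  next
    case False
    have "measure (measure_pmf (anc p n)) ((\<lambda>h. g \<circ> h) -` {g. \<not> cst g})
        \<le> measure (measure_pmf (anc p n)) (UNIV - {g. cst g})"
      by (rule measure_pmf.finite_measure_mono) (auto dest: cst_comp)
    also have "\<dots> = 1 - ?q" using measure_pmf.prob_compl[of "{g. cst g}" "anc p n"] by simp
    finally show ?thesis using False by simp
  qed
  have "measure (measure_pmf (anc p (m + n))) {g. \<not> cst g}
     = (\<Sum>g\<in>UNIV. pmf (anc p m) g * measure (measure_pmf (map_pmf (\<lambda>h. g \<circ> h) (anc p n))) {g. \<not> cst g})"
    unfolding anc_add by (rule meas_bind)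
  also have "\<dots> \<le> (\<Sum>g\<in>UNIV. pmf (anc p m) g * ((1 - ?q) * (if g \<in> {g. \<not> cst g} then 1 else 0)))"
    by (rule sum_mono, rule mult_left_mono[OF pt]) simp
  also have "\<dots> = (1 - ?q) * measure (measure_pmf (anc p m)) {g. \<not> cst g}"
    by (simp add: meas_sum[of "anc p m"] sum_distrib_left mult_ac)
  finally show ?thesis .
qed

lemma P_mono:
  fixes p :: "('s::finite) event pmf"
  shows "measure (measure_pmf (anc p t)) {g. \<forall>j. g j \<in> S} \<le> measure (measure_pmf (anc p (Suc t))) {g. \<forall>j. g j \<in> S}"
proof -
  have pt: "(if g \<in> {g. \<forall>j. g j \<in> S} then 1 else 0)
      \<le> measure (measure_pmf (map_pmf (\<lambda>e. g \<circ> fe e) p)) {g. \<forall>j. g j \<in> S}" for g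
  proof (cases "\<forall>j. g j \<in> S")
    case True
    then have "(\<lambda>e. g \<circ> fe e) -` {g. \<forall>j. g j \<in> S} = UNIV" by auto
    then show ?thesis using True by simp
  qed simp
  have "measure (measure_pmf (anc p t)) {g. \<forall>j. g j \<in> S} = (\<Sum>g\<in>UNIV. pmf (anc p t) g * (if g \<in> {g. \<forall>j. g j \<in> S} then 1 else 0))"
    by (rule meas_sum)
  also have "\<dots> \<le> (\<Sum>g\<in>UNIV. pmf (anc p t) g * measure (measure_pmf (map_pmf (\<lambda>e. g \<circ> fe e) p)) {g. \<forall>j. g j \<in> S})"
    by (rule sum_mono, rule mult_left_mono[OF pt]) simp
  also have "\<dots> = measure (measure_pmf (anc p (Suc t))) {g. \<forall>j. g j \<in> S}"
    by (simp only: anc.simps meas_bind)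
  finally show ?thesis .
qed

lemma decomp:
  fixes M :: "(('s::finite) \<Rightarrow> 's) pmf"
  shows "0 \<le> measure (measure_pmf M) {g. \<forall>j. g j \<in> S} - (\<Sum>i\<in>S. measure (measure_pmf M) {g. \<forall>j. g j \<in> {i}})
     \<and> measure (measure_pmf M) {g. \<forall>j. g j \<in> S} - (\<Sum>i\<in>S. measure (measure_pmf M) {g. \<forall>j. g j \<in> {i}})
       \<le> measure (measure_pmf M) {g. \<not> cst g}"
proof -
  define a where "a g = (if g \<in> {g. \<forall>j. g j \<in> S} then 1 else (0::real))" for g :: "'s \<Rightarrow> 's"
  define b where "b g = (\<Sum>i\<in>S. if g \<in> {g. \<forall>j. g j \<in> {i}} then 1 else (0::real))" for g :: "'s \<Rightarrow> 's"
  define c where "c g = (if g \<in> {g. \<not> cst g} then 1 else (0::real))" for g :: "'s \<Rightarrow> 's"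
  have pt: "0 \<le> a g - b g \<and> a g - b g \<le> c g" for g
  proof (cases "cst g")
    case True
    then obtain c0 where c0: "\<And>j. g j = c0" by (auto simp: cst_def)
    have "b g = (\<Sum>i\<in>S. if i = c0 then 1 else 0)"
      unfolding b_def by (rule sum.cong) (auto simp: c0)
    also have "\<dots> = (if c0 \<in> S then 1 else 0)" by (simp add: sum.delta)
    finally show ?thesis using True by (simp add: a_def c_def c0)
  next
    case False
    have "b g = 0" unfolding b_def using False by (intro sum.neutral) (auto simp: cst_def)
    then show ?thesis using False by (simp add: a_def c_def)
  qed
  have "measure (measure_pmf M) {g. \<forall>j. g j \<in> S} - (\<Sum>i\<in>S. measure (measure_pmf M) {g. \<forall>j. g j \<in> {i}})
      = (\<Sum>g\<in>UNIV. pmf M g * (a g - b g))"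
  proof -
    have "(\<Sum>i\<in>S. measure (measure_pmf M) {g. \<forall>j. g j \<in> {i}})
       = (\<Sum>i\<in>S. \<Sum>g\<in>UNIV. pmf M g * (if g \<in> {g. \<forall>j. g j \<in> {i}} then 1 else 0))"
      by (simp only: meas_sum[of M])
    also have "\<dots> = (\<Sum>g\<in>UNIV. \<Sum>i\<in>S. pmf M g * (if g \<in> {g. \<forall>j. g j \<in> {i}} then 1 else 0))"
      by (rule sum.swap)
    also have "\<dots> = (\<Sum>g\<in>UNIV. pmf M g * b g)"
      by (simp only: b_def sum_distrib_left)
    finally have e1: "(\<Sum>i\<in>S. measure (measure_pmf M) {g. \<forall>j. g j \<in> {i}}) = (\<Sum>g\<in>UNIV. pmf M g * b g)" .
    have e2: "measure (measure_pmf M) {g. \<forall>j. g j \<in> S} = (\<Sum>g\<in>UNIV. pmf M g * a g)"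
      by (simp only: meas_sum[of M] a_def)
    show ?thesis by (simp only: e1 e2 sum_subtractf[symmetric] right_diff_distrib)
  qed
  moreover have "(\<Sum>g\<in>UNIV. pmf M g * (a g - b g)) \<ge> 0"
    using pt by (intro sum_nonneg) simp
  moreover have "(\<Sum>g\<in>UNIV. pmf M g * (a g - b g)) \<le> (\<Sum>g\<in>UNIV. pmf M g * c g)"
    using pt by (intro sum_mono mult_left_mono) auto
  moreover have "(\<Sum>g\<in>UNIV. pmf M g * c g) = measure (measure_pmf M) {g. \<not> cst g}"
    by (simp add: meas_sum[of M] c_def)
  ultimately show ?thesis by simp
qed


lemma B_tendsto:
  fixes p :: "('s::finite) event pmf"
  assumes fa: "fixation_assumption p"
  shows "(\<lambda>t. measure (measure_pmf (anc p t)) {g. \<not> cst g}) \<longlonglongrightarrow> 0"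
proof -
  define B where "B t = measure (measure_pmf (anc p t)) {g. \<not> cst g}" for t
  from fa obtain i es where es0: "set es \<subseteq> set_pmf p \<and> (\<forall>s j. apply_events es s j = s i)"
    unfolding fixation_assumption_def by (elim exE) (rule that)
  have es: "set es \<subseteq> set_pmf p" "\<And>s j. apply_events es s j = s i" using es0 by auto
  obtain e0 where e0: "e0 \<in> set_pmf p" using set_pmf_not_empty[of p] by auto
  define es' where "es' = es @ [e0]"
  define L where "L = length es'"
  have Lpos: "0 < L" by (simp add: L_def es'_def)
  have Gi: "Gs es j = i" for j
    using es(2)[of "\<lambda>x. x = i" j] by (simp add: apply_events_Gs)
  have cstG: "cst (Gs es')" by (auto simp: es'_def Gs_append cst_def Gi)
  have inset: "Gs es' \<in> set_pmf (anc p L)"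
    unfolding L_def by (rule Gs_in_anc) (use es(1) e0 in \<open>auto simp: es'_def\<close>)
  define q where "q = measure (measure_pmf (anc p L)) {g. cst g}"
  have "0 < pmf (anc p L) (Gs es')" using inset by (simp add: pmf_positive)
  also have "pmf (anc p L) (Gs es') = measure (measure_pmf (anc p L)) {Gs es'}"
    by (simp add: measure_pmf_single)
  also have "\<dots> \<le> q" unfolding q_def
    by (rule measure_pmf.finite_measure_mono) (use cstG in auto)
  finally have qpos: "0 < q" .
  have qle: "q \<le> 1" unfolding q_def by (rule measure_pmf.prob_le_1)
  have Bnn: "0 \<le> B t" for t by (simp add: B_def)
  have Bpow: "B (k * L) \<le> (1 - q) ^ k" for k
  proof (induct k)
    case 0
    then show ?case by (simp add: B_def measure_pmf.prob_le_1)
  next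
    case (Suc k)
    have "B (Suc k * L) = B (k * L + L)" by (simp add: add.commute)
    also have "\<dots> \<le> (1 - q) * B (k * L)" unfolding B_def q_def by (rule B_step)
    also have "\<dots> \<le> (1 - q) * (1 - q) ^ k" using Suc qle by (intro mult_left_mono) auto
    finally show ?case by simp
  qed
  have dec: "decseq B"
  proof (rule decseq_SucI)
    fix t
    have "B (t + 1) \<le> (1 - measure (measure_pmf (anc p 1)) {g. cst g}) * B t"
      unfolding B_def by (rule B_step)
    also have "\<dots> \<le> B t"
    proof -
      have "0 \<le> measure (measure_pmf (anc p 1)) {g. cst g} * B t"
        by (intro mult_nonneg_nonneg measure_nonneg Bnn)
      then show ?thesis by (simp only: left_diff_distrib mult_1_left)
    qed
    finally show "B (Suc t) \<le> B t" by simp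
  qed
  obtain l where l: "B \<longlonglongrightarrow> l" "\<forall>i. l \<le> B i"
    using decseq_convergent[OF dec, of 0] Bnn by blast
  have sm: "strict_mono (\<lambda>k. k * L)" using Lpos by (simp add: strict_mono_def)
  have sub: "(\<lambda>k. B (k * L)) \<longlonglongrightarrow> l"
    using LIMSEQ_subseq_LIMSEQ[OF l(1) sm] by (simp add: comp_def)
  have pw: "(\<lambda>k. (1 - q) ^ k) \<longlonglongrightarrow> 0"
    by (rule LIMSEQ_power_zero) (use qpos qle in simp)
  have "l \<le> 0" using LIMSEQ_le[OF sub pw] Bpow by auto
  moreover have "0 \<le> l" using LIMSEQ_le_const[OF l(1), of 0] Bnn by auto
  ultimately have "l = 0" by simp
  with l(1) show ?thesis unfolding B_def by simp
qed

theorem mainTheorem6: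
  fixes p :: "('site::finite) event pmf"
  assumes "fixation_assumption p"
  shows "(\<forall>S. convergent (fix_prob_seq p S))
       \<and> (\<forall>S. rho p S = (\<Sum>i\<in>S. rho p {i}))
       \<and> (\<Sum>i\<in>UNIV. rho p {i}) = 1"
proof -
  have conv: "convergent (fix_prob_seq p S)" for S
  proof -
    have "incseq (fix_prob_seq p S)"
      by (rule incseq_SucI) (unfold fps, rule P_mono)
    moreover have "\<forall>i. fix_prob_seq p S i \<le> 1" by (simp add: fps measure_pmf.prob_le_1)
    ultimately obtain l where "fix_prob_seq p S \<longlonglongrightarrow> l" by (rule incseq_convergent)
    then show ?thesis by (auto simp: convergent_def)
  qed
  have lim: "fix_prob_seq p S \<longlonglongrightarrow> rho p S" for S
    using conv[of S] unfolding rho_def by (simp add: convergent_LIMSEQ_iff)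
  have sumS: "rho p S = (\<Sum>i\<in>S. rho p {i})" for S
  proof -
    define D where "D t = fix_prob_seq p S t - (\<Sum>i\<in>S. fix_prob_seq p {i} t)" for t
    have D1: "D \<longlonglongrightarrow> rho p S - (\<Sum>i\<in>S. rho p {i})"
      unfolding D_def by (intro tendsto_diff tendsto_sum lim)
    have D2: "D \<longlonglongrightarrow> 0"
    proof (rule tendsto_sandwich[OF _ _ tendsto_const B_tendsto[OF assms]])
      show "\<forall>\<^sub>F n in sequentially. 0 \<le> D n"
      proof (rule always_eventually, intro allI)
        fix n show "0 \<le> D n" using decomp[of "anc p n" S] unfolding D_def fps by linarith
      qed
      show "\<forall>\<^sub>F n in sequentially. D n \<le> measure (measure_pmf (anc p n)) {g. \<not> cst g}"
      proof (rule always_eventually, intro allI)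
        fix n show "D n \<le> measure (measure_pmf (anc p n)) {g. \<not> cst g}"
          using decomp[of "anc p n" S] unfolding D_def fps by linarith
      qed
    qed
    from LIMSEQ_unique[OF D1 D2] show ?thesis by simp
  qed
  have "fix_prob_seq p UNIV = (\<lambda>t. 1)"
    by (simp add: fun_eq_iff fps)
  then have "rho p UNIV = 1" unfolding rho_def by (simp add: limI)
  then have "(\<Sum>i\<in>UNIV. rho p {i}) = 1" using sumS[of UNIV] by linarith
  then show ?thesis using conv sumS by blast
qed

end
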